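(* Let $\sigma_t=e^{Y_t}$, where $Y_t=\varphi Y_{t-1}+\eta_t$ is the causal stationary AR(1) process with $\varphi\in(-1,1)$ and i.i.d. $(\eta_t)$. Assume that $P(e^\eta>x)=x^{-\alpha}L(x)$, $x>0$, for some $\alpha>0$ and slowly varying $L$, and, if $\varphi<0$, additionally $P(e^{\eta^-}>x)\le cP(e^\eta>x)$ for $x\ge1$ and some constant $c>0$. Then $Ee^{(\alpha+\varepsilon)\varphi Y}<\infty$ for some $\varepsilon>0$, and $$P(\sigma>x)\sim Ee^{\alpha\varphi Y}\,P(e^\eta>x)=Ee^{\alpha\varphi Y}\,x^{-\alpha}L(x),\qquad x\to\infty.$$
   Context: The causal stationary AR(1) process is $Y_t=\sum_{j\ge0}\varphi^j\eta_{t-j}$, where $(\eta_t)$ is i.i.d.; $\eta$, $Y$, $\sigma$ denote generic elements; $\eta^-=\max(-\eta,0)$. *)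

theory Defs
  imports "HOL-Probability.Probability" "HOL-Library.Landau_Symbols"
begin

definition slowly_varying :: "(real \<Rightarrow> real) \<Rightarrow> bool" where
  "slowly_varying L \<longleftrightarrow>
     (\<forall>\<^sub>F x in at_top. L x > 0) \<and>
     (\<forall>c>0. ((\<lambda>x. L (c * x) / L x) \<longlongrightarrow> 1) at_top)"

end

theory Submission
  imports Defs
begin


locale rvtail =
  fixes Fb L :: "real \<Rightarrow> real" and \<alpha> :: real
  assumes alpha: "\<alpha> > 0"
    and L: "slowly_varying L"
    and Fmono: "\<And>x y. x \<le> y \<Longrightarrow> Fb y \<le> Fb x"
    and Fnn: "\<And>x. 0 \<le> Fb x"
    and Fle1: "\<And>x. Fb x \<le> 1"
    and Ftail: "\<And>x. x > 0 \<Longrightarrow> Fb x = x powr (-\<alpha>) * L x"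
begin

lemma Fpos_ev: "\<forall>\<^sub>F x in at_top. Fb x > 0"
proof -
  have "\<forall>\<^sub>F x in at_top. L x > 0" using L unfolding slowly_varying_def by blast
  moreover have "\<forall>\<^sub>F x in at_top. (x::real) > 0" by (rule eventually_gt_at_top)
  ultimately show ?thesis
    by eventually_elim (simp add: Ftail)
qed

lemma ratio_lim:
  assumes c: "c > 0"
  shows "((\<lambda>x. Fb (c*x) / Fb x) \<longlongrightarrow> c powr (-\<alpha>)) at_top"
proof -
  have lim: "((\<lambda>x. L (c*x) / L x) \<longlongrightarrow> 1) at_top" using L c unfolding slowly_varying_def by blast
  have "((\<lambda>x. c powr (-\<alpha>) * (L (c*x) / L x)) \<longlongrightarrow> c powr (-\<alpha>) * 1) at_top"
    by (intro tendsto_mult tendsto_const lim)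
  moreover have "\<forall>\<^sub>F x in at_top. c powr (-\<alpha>) * (L (c*x) / L x) = Fb (c*x) / Fb x"
  proof -
    have "\<forall>\<^sub>F x in at_top. (x::real) > 0" by (rule eventually_gt_at_top)
    then show ?thesis
    proof eventually_elim
      case (elim x)
      then have "c*x > 0" using c by simp
      then show ?case using elim c
        by (simp add: Ftail powr_mult powr_minus field_simps)
    qed
  qed
  ultimately show ?thesis by (simp add: tendsto_cong)
qed

lemma decay:
  assumes "\<beta> < \<alpha>"
  shows "\<exists>x1>0. \<forall>x\<ge>x1. Fb (2*x) \<le> 2 powr (-\<beta>) * Fb x"
proof -
  have "2 powr (-\<alpha>) < 2 powr (-\<beta>)" using assms by simp
  from order_tendstoD(2)[OF ratio_lim[of 2] this]
  have "\<forall>\<^sub>F x in at_top. Fb (2*x) / Fb x < 2 powr (-\<beta>)" by simp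
  with Fpos_ev have "\<forall>\<^sub>F x in at_top. Fb (2*x) \<le> 2 powr (-\<beta>) * Fb x"
    by eventually_elim (simp add: divide_less_eq)
  then obtain x1 where "\<forall>x\<ge>x1. Fb (2*x) \<le> 2 powr (-\<beta>) * Fb x"
    by (auto simp: eventually_at_top_linorder)
  then show ?thesis by (intro exI[of _ "max x1 1"]) auto
qed

lemma doubling:
  assumes "\<beta> > \<alpha>"
  shows "\<exists>x1>0. \<forall>x\<ge>x1. Fb (x/2) \<le> 2 powr \<beta> * Fb x \<and> Fb x > 0"
proof -
  have "(1/2::real) powr (-\<alpha>) < 2 powr \<beta>" using assms
    by (simp add: powr_minus_divide powr_divide)
  from order_tendstoD(2)[OF ratio_lim[of "1/2"] this]
  have "\<forall>\<^sub>F x in at_top. Fb (1/2*x) / Fb x < 2 powr \<beta>" by simp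
  with Fpos_ev have "\<forall>\<^sub>F x in at_top. Fb (x/2) \<le> 2 powr \<beta> * Fb x \<and> Fb x > 0"
    by eventually_elim (simp add: divide_less_eq)
  then obtain x1 where "\<forall>x\<ge>x1. Fb (x/2) \<le> 2 powr \<beta> * Fb x \<and> Fb x > 0"
    by (auto simp: eventually_at_top_linorder)
  then show ?thesis by (intro exI[of _ "max x1 1"]) auto
qed

lemma potter:
  assumes b: "\<beta> > \<alpha>"
  shows "\<exists>x0>0. (\<forall>x\<ge>x0. Fb x > 0) \<and>
     (\<forall>u x. x0 \<le> u \<longrightarrow> u \<le> x \<longrightarrow> Fb u \<le> 2 powr \<beta> * (x/u) powr \<beta> * Fb x)"
proof -
  obtain x0 where x0: "x0 > 0" and D: "\<And>x. x \<ge> x0 \<Longrightarrow> Fb (x/2) \<le> 2 powr \<beta> * Fb x \<and> Fb x > 0"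
    using doubling[OF b] by blast
  have bpos: "\<beta> > 0" using b alpha by simp
  have K1: "2 powr \<beta> \<ge> (1::real)" using bpos by (simp add: ge_one_powr_ge_zero)
  have main: "\<forall>u x. x0 \<le> u \<longrightarrow> u \<le> x \<longrightarrow> x \<le> 2^n * u \<longrightarrow> Fb u \<le> 2 powr \<beta> * (x/u) powr \<beta> * Fb x" for n
  proof (induction n)
    case 0
    show ?case
    proof (intro allI impI)
      fix u x assume h: "x0 \<le> u" "u \<le> x" "x \<le> 2^0 * u"
      then have "x = u" by simp
      then show "Fb u \<le> 2 powr \<beta> * (x/u) powr \<beta> * Fb x"
        using h x0 mult_right_mono[OF K1 Fnn[of u]] by simp
    qed
  next
    case (Suc n)
    show ?case
    proof (intro allI impI)
      fix u x assume h: "x0 \<le> u" "u \<le> x" "x \<le> 2^Suc n * u"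
      have upos: "u > 0" using h x0 by simp
      have xu1: "(x/u) powr \<beta> \<ge> 1" using h upos bpos by (simp add: ge_one_powr_ge_zero)
      show "Fb u \<le> 2 powr \<beta> * (x/u) powr \<beta> * Fb x"
      proof (cases "x \<le> 2*u")
        case True
        have "Fb u \<le> Fb (x/2)" using True by (intro Fmono) simp
        also have "\<dots> \<le> 2 powr \<beta> * Fb x" using D[of x] h by simp
        also have "\<dots> \<le> 2 powr \<beta> * (x/u) powr \<beta> * Fb x"
          using xu1 Fnn[of x] K1 by (simp add: mult_right_mono mult_left_mono)
        finally show ?thesis .
      next
        case False
        have "Fb u \<le> 2 powr \<beta> * ((x/2)/u) powr \<beta> * Fb (x/2)"
        proof -
          have "u \<le> x/2" "x/2 \<le> 2^n * u" using h False by auto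
          then show ?thesis using Suc.IH h(1) by blast
        qed
        also have "\<dots> \<le> 2 powr \<beta> * ((x/2)/u) powr \<beta> * (2 powr \<beta> * Fb x)"
          using D[of x] h by (intro mult_left_mono) auto
        also have "\<dots> = 2 powr \<beta> * (((x/u)/2) powr \<beta> * 2 powr \<beta>) * Fb x" by (simp add: mult.commute)
        also have "((x/u)/2) powr \<beta> * 2 powr \<beta> = (x/u) powr \<beta>"
          using upos h by (simp add: powr_divide powr_mult)
        finally show ?thesis by simp
      qed
    qed
  qed
  show ?thesis
  proof (intro exI[of _ x0] conjI allI impI)
    show "x0 > 0" by fact
    show "x \<ge> x0 \<Longrightarrow> Fb x > 0" for x using D by blast
    fix u x assume h: "x0 \<le> u" "u \<le> x"
    have upos: "u > 0" using h x0 by simp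
    obtain n where "x/u < 2^n" using real_arch_pow[of 2 "x/u"] by auto
    then have "x \<le> 2^n * u" using upos by (simp add: divide_less_eq)
    then show "Fb u \<le> 2 powr \<beta> * (x/u) powr \<beta> * Fb x" using main h by blast
  qed
qed

lemma tail_over:
  assumes e: "\<epsilon> > 0"
  shows "((\<lambda>x. x powr (-(\<alpha>+\<epsilon>)) / Fb x) \<longlongrightarrow> 0) at_top"
proof -
  define \<beta> where "\<beta> = \<alpha> + \<epsilon>/2"
  have b: "\<beta> > \<alpha>" using e by (simp add: \<beta>_def)
  obtain x0 where x0: "x0 > 0" and P: "\<And>x. x\<ge>x0 \<Longrightarrow> Fb x > 0"
     and B: "\<And>u x. x0 \<le> u \<Longrightarrow> u \<le> x \<Longrightarrow> Fb u \<le> 2 powr \<beta> * (x/u) powr \<beta> * Fb x"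
    using potter[OF b] by blast
  define K where "K = 2 powr \<beta> * x0 powr (-\<beta>) / Fb x0"
  have lim: "((\<lambda>x. K * x powr (-(\<epsilon>/2))) \<longlongrightarrow> K * 0) at_top"
    using e by (intro tendsto_mult tendsto_const tendsto_neg_powr filterlim_ident) auto
  show ?thesis
  proof (rule tendsto_sandwich[OF _ _ tendsto_const lim[simplified]])
    show "\<forall>\<^sub>F x in at_top. 0 \<le> x powr (-(\<alpha>+\<epsilon>)) / Fb x"
      using Fnn by simp
    have "\<forall>\<^sub>F x in at_top. x \<ge> x0" by (rule eventually_ge_at_top)
    then show "\<forall>\<^sub>F x in at_top. x powr (-(\<alpha>+\<epsilon>)) / Fb x \<le> K * x powr (-(\<epsilon>/2))"
    proof eventually_elim
      case (elim x)
      have xp: "x > 0" using elim x0 by simp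
      have F0: "Fb x0 > 0" using P by simp
      have Fx: "Fb x > 0" using P elim by simp
      have "Fb x0 \<le> 2 powr \<beta> * (x/x0) powr \<beta> * Fb x" using B[of x0 x] elim by simp
      then have "1 / Fb x \<le> 2 powr \<beta> * (x/x0) powr \<beta> / Fb x0"
        using F0 Fx by (simp add: field_simps)
      then have "x powr (-(\<alpha>+\<epsilon>)) * (1 / Fb x) \<le> x powr (-(\<alpha>+\<epsilon>)) * (2 powr \<beta> * (x/x0) powr \<beta> / Fb x0)"
        by (intro mult_left_mono) auto
      also have "\<dots> = K * (x powr (-(\<alpha>+\<epsilon>)) * x powr \<beta>)"
        using xp x0 by (simp add: K_def powr_divide powr_minus field_simps)
      also have "x powr (-(\<alpha>+\<epsilon>)) * x powr \<beta> = x powr (-(\<epsilon>/2))"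
        by (simp add: powr_add[symmetric] \<beta>_def)
      finally show ?case by simp
    qed
  qed
qed

end



lemma ennreal_le_suminf: "(f::nat\<Rightarrow>ennreal) n \<le> suminf f"
  using sum_le_suminf[of f "{n}"] by simp

lemma exp_le_lin: "(y::real) \<ge> 0 \<Longrightarrow> exp y \<le> 1 + y * exp y"
proof -
  assume y: "y \<ge> 0"
  have "1 - y \<le> exp (-y)" using exp_ge_add_one_self[of "-y"] by simp
  then have "(1 - y) * exp y \<le> exp (-y) * exp y" by (intro mult_right_mono) auto
  then show ?thesis by (simp add: exp_minus field_simps)
qed

context rvtail begin

lemma expmom:
  assumes P: "prob_space M" and V[measurable]: "V \<in> borel_measurable M" and c: "c \<ge> 0"
   and tl: "\<And>x. x \<ge> 1 \<Longrightarrow> measure M {\<omega>\<in>space M. exp (max (V \<omega>) 0) > x} \<le> c * Fb x"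
   and t: "0 \<le> t" "t < \<alpha>"
  shows "(\<integral>\<^sup>+\<omega>. ennreal (exp (t * max (V \<omega>) 0)) \<partial>M) < \<infinity>"
proof -
  interpret prob_space M by fact
  define \<beta> where "\<beta> = (t+\<alpha>)/2"
  have b: "t < \<beta>" "\<beta> < \<alpha>" using t by (auto simp: \<beta>_def)
  obtain x1 where x1: "x1 > 0" and D: "\<And>x. x \<ge> x1 \<Longrightarrow> Fb (2*x) \<le> 2 powr (-\<beta>) * Fb x"
    using decay[OF b(2)] by blast
  obtain k0 where k0: "x1 < 2^k0" using real_arch_pow[of 2 x1] by auto
  define r where "r = 2 powr (-\<beta>)"
  have rpos: "r > 0" by (simp add: r_def)
  have Fk: "Fb (2^(k0+m)) \<le> r^m" for m
  proof (induction m)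
    case 0 then show ?case using Fle1 by simp
  next
    case (Suc m)
    have "(2::real)^k0 \<le> 2^(k0+m)" by (intro power_increasing) auto
    then have "x1 \<le> 2^(k0+m)" using k0 by linarith
    then have "Fb (2^(k0+Suc m)) \<le> r * Fb (2^(k0+m))" using D[of "2^(k0+m)"] by (simp add: r_def)
    also have "\<dots> \<le> r * r^m" using Suc rpos by (intro mult_left_mono) auto
    finally show ?case by simp
  qed
  define K0 where "K0 = max 1 c * (2 powr \<beta>)^k0"
  have rb: "r * 2 powr \<beta> = 1" by (simp add: r_def powr_minus)
  define Pn where "Pn n = measure M {\<omega>\<in>space M. exp (max (V \<omega>) 0) > 2^n}" for n :: nat
  have Pn: "Pn n \<le> K0 * r^n" for n
  proof (cases "n < k0")
    case True
    then obtain m where m: "k0 = n + m" by (metis less_imp_add_positive)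
    have "Pn n \<le> 1" unfolding Pn_def by (rule prob_le_1)
    also have "1 \<le> (2 powr \<beta>)^m" using b t by (intro one_le_power) (simp add: ge_one_powr_ge_zero)
    also have "(2 powr \<beta>)^m = r^n * (2 powr \<beta>)^k0"
      using rb by (simp add: m power_add mult.assoc[symmetric] power_mult_distrib[symmetric])
    also have "\<dots> \<le> K0 * r^n" unfolding K0_def using rpos
      by (simp add: mult.commute mult_right_mono)
    finally show ?thesis .
  next
    case False
    then obtain m where m: "n = k0 + m" by (metis le_add_diff_inverse not_less)
    have "Pn n \<le> c * Fb (2^n)" unfolding Pn_def by (rule tl) simp
    also have "\<dots> \<le> c * r^m" using Fk[of m] c m by (simp add: mult_left_mono)
    also have "r^m = r^n * (2 powr \<beta>)^k0"
      using rb by (simp add: m power_add mult.assoc power_mult_distrib[symmetric])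
    also have "c * (r^n * (2 powr \<beta>)^k0) \<le> K0 * r^n" unfolding K0_def using rpos
      by (simp add: mult_right_mono mult.commute mult.left_commute)
    finally show ?thesis .
  qed
  define q where "q = exp (t * ln 2)"
  have qpos: "q > 0" by (simp add: q_def)
  define S where "S n = {\<omega>\<in>space M. exp (max (V \<omega>) 0) > 2^n}" for n :: nat
  have S[measurable]: "S n \<in> sets M" for n unfolding S_def by measurable
  have pw: "ennreal (exp (t * max (V \<omega>) 0)) \<le> 1 + (\<Sum>n. ennreal (q^(n+1)) * indicator (S n) \<omega>)"
    if \<omega>: "\<omega> \<in> space M" for \<omega>
  proof (cases "V \<omega> \<le> 0")
    case True then show ?thesis by simp
  next
    case False
    define w where "w = V \<omega>"
    have w: "w > 0" using False by (simp add: w_def)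
    define k where "k = \<lceil>w / ln 2\<rceil>"
    have k1: "k \<ge> 1" using w by (simp add: k_def)
    define n where "n = nat k - 1"
    have nk: "real (n+1) = of_int k" using k1 by (simp add: n_def)
    have "w / ln 2 \<le> of_int k" by (simp add: k_def)
    then have up: "w \<le> real (n+1) * ln 2" using nk by (simp add: divide_le_eq)
    have "of_int k - 1 < w / ln 2" using ceiling_correct[of "w/ln 2"] by (simp add: k_def)
    then have "real n < w / ln 2" using nk by simp
    then have lo: "real n * ln 2 < w" by (simp add: less_divide_eq)
    have "(2::real)^n = exp (real n * ln 2)" by (simp add: exp_of_nat_mult)
    also have "\<dots> < exp (max (V \<omega>) 0)" using lo w by (simp add: w_def)
    finally have inS: "\<omega> \<in> S n" using \<omega> by (simp add: S_def)
    have "exp (t * max (V \<omega>) 0) = exp (t * w)" using w by (simp add: w_def)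
    also have "\<dots> \<le> exp (t * (real (n+1) * ln 2))" using up t by (simp add: mult_left_mono)
    also have "\<dots> = q^(n+1)" unfolding q_def by (simp add: exp_of_nat_mult[symmetric] algebra_simps exp_add)
    finally have "ennreal (exp (t * max (V \<omega>) 0)) \<le> ennreal (q^(n+1)) * indicator (S n) \<omega>"
      using inS by (simp add: ennreal_leI)
    also have "\<dots> \<le> (\<Sum>n. ennreal (q^(n+1)) * indicator (S n) \<omega>)" by (rule ennreal_le_suminf)
    finally show ?thesis by (simp add: add_increasing)
  qed
  have "(\<integral>\<^sup>+\<omega>. ennreal (exp (t * max (V \<omega>) 0)) \<partial>M)
      \<le> (\<integral>\<^sup>+\<omega>. 1 + (\<Sum>n. ennreal (q^(n+1)) * indicator (S n) \<omega>) \<partial>M)"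
    by (intro nn_integral_mono pw)
  also have "\<dots> = 1 + (\<Sum>n. ennreal (q^(n+1)) * emeasure M (S n))"
    by (simp add: nn_integral_add nn_integral_suminf nn_integral_cmult_indicator emeasure_space_1)
  also have "\<dots> \<le> 1 + (\<Sum>n. ennreal (q * K0 * (q*r)^n))"
  proof (intro add_left_mono suminf_le)
    fix n
    have "emeasure M (S n) = ennreal (Pn n)" by (simp add: S_def Pn_def emeasure_eq_measure)
    then have "ennreal (q^(n+1)) * emeasure M (S n) = ennreal (q^(n+1) * Pn n)"
      using qpos measure_nonneg[of M "S n"] by (simp add: ennreal_mult[symmetric] Pn_def S_def mult.assoc)
    also have "\<dots> \<le> ennreal (q^(n+1) * (K0 * r^n))"
      using Pn[of n] qpos by (intro ennreal_leI mult_left_mono) auto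
    also have "q^(n+1) * (K0 * r^n) = q * K0 * (q*r)^n" by (simp add: power_mult_distrib)
    finally show "ennreal (q^(n+1)) * emeasure M (S n) \<le> ennreal (q * K0 * (q*r)^n)" .
  qed auto
  also have "\<dots> < \<infinity>"
  proof -
    have qr: "q * r < 1" "q*r > 0" using b rpos qpos
      by (auto simp: q_def r_def powr_def exp_add[symmetric] algebra_simps)
    have K0: "K0 \<ge> 0" by (simp add: K0_def)
    have sm: "summable (\<lambda>n. q * K0 * (q*r)^n)"
      using qr by (intro summable_mult summable_geometric) auto
    have "(\<Sum>n. ennreal (q * K0 * (q*r)^n)) = ennreal (\<Sum>n. q * K0 * (q*r)^n)"
      using qr qpos K0 by (intro suminf_ennreal2 sm) auto
    then show ?thesis by simp
  qed
  finally show ?thesis .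
qed

lemma mgf_bound:
  assumes P: "prob_space M" and V[measurable]: "V \<in> borel_measurable M" and c: "c \<ge> 0"
   and tl: "\<And>x. x \<ge> 1 \<Longrightarrow> measure M {\<omega>\<in>space M. exp (max (V \<omega>) 0) > x} \<le> c * Fb x"
   and t: "0 \<le> t0" "t0 < t1" "t1 < \<alpha>"
  shows "\<exists>K\<ge>0. \<forall>t. 0 \<le> t \<longrightarrow> t \<le> t0 \<longrightarrow> (\<integral>\<^sup>+\<omega>. ennreal (exp (t * V \<omega>)) \<partial>M) \<le> ennreal (1 + t*K)"
proof -
  interpret prob_space M by fact
  define B where "B = (\<integral>\<^sup>+\<omega>. ennreal (exp (t1 * max (V \<omega>) 0)) \<partial>M)"
  have Bf: "B < \<infinity>" unfolding B_def using t by (intro expmom[OF P V c tl]) auto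
  define K where "K = enn2real B / (t1 - t0)"
  have Beq: "B = ennreal (enn2real B)" using Bf by simp
  show ?thesis
  proof (intro exI[of _ K] conjI allI impI)
    show "K \<ge> 0" using t by (simp add: K_def)
    fix t assume tt: "0 \<le> t" "t \<le> t0"
    have pw: "exp (t * V \<omega>) \<le> 1 + t / (t1 - t0) * exp (t1 * max (V \<omega>) 0)" for \<omega>
    proof -
      define w where "w = max (V \<omega>) 0"
      have w: "w \<ge> 0" "t * V \<omega> \<le> t * w" using tt by (auto simp: w_def mult_left_mono)
      have e1: "exp (t * V \<omega>) \<le> 1 + (t*w) * exp (t*w)"
        using w tt exp_le_lin[of "t*w"] by (meson exp_le_cancel_iff mult_nonneg_nonneg order_trans)
      have e2: "(t*w) * exp (t*w) \<le> (t*w) * exp (t0*w)" using w tt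
        by (intro mult_left_mono) (auto intro: mult_right_mono)
      have "(t1-t0)*w \<le> exp ((t1-t0)*w)" using exp_ge_add_one_self[of "(t1-t0)*w"] by linarith
      then have "((t1-t0)*w) * exp (t0*w) \<le> exp ((t1-t0)*w) * exp (t0*w)"
        by (intro mult_right_mono) auto
      also have "exp ((t1-t0)*w) * exp (t0*w) = exp (t1*w)" by (simp add: exp_add[symmetric] algebra_simps)
      finally have "w * exp (t0*w) \<le> exp (t1*w) / (t1-t0)" using t by (simp add: field_simps)
      then have "t * (w * exp (t0*w)) \<le> t * (exp (t1*w) / (t1-t0))" using tt by (intro mult_left_mono) auto
      then show ?thesis using e1 e2 by (simp add: w_def)
    qed
    have "(\<integral>\<^sup>+\<omega>. ennreal (exp (t * V \<omega>)) \<partial>M)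
        \<le> (\<integral>\<^sup>+\<omega>. 1 + ennreal (t / (t1 - t0)) * ennreal (exp (t1 * max (V \<omega>) 0)) \<partial>M)"
    proof (intro nn_integral_mono)
      fix \<omega>
      have nn: "0 \<le> t/(t1-t0) * exp (t1 * max (V \<omega>) 0)" using t tt by simp
      have "ennreal (exp (t * V \<omega>)) \<le> ennreal (1 + t/(t1-t0) * exp (t1 * max (V \<omega>) 0))"
        by (rule ennreal_leI[OF pw])
      also have "\<dots> = 1 + ennreal (t / (t1 - t0)) * ennreal (exp (t1 * max (V \<omega>) 0))"
        using nn t tt by (simp add: ennreal_plus ennreal_mult[symmetric])
      finally show "ennreal (exp (t * V \<omega>)) \<le> 1 + ennreal (t / (t1 - t0)) * ennreal (exp (t1 * max (V \<omega>) 0))" .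
    qed
    also have "\<dots> = 1 + ennreal (t / (t1 - t0)) * B"
      by (simp add: nn_integral_add nn_integral_cmult B_def emeasure_space_1)
    also have "\<dots> = ennreal (1 + t*K)"
      using t tt apply (subst Beq) apply (simp add: K_def ennreal_mult[symmetric] ennreal_plus[symmetric] del: ennreal_plus)
      by (subst ennreal_plus) auto
    finally show "(\<integral>\<^sup>+\<omega>. ennreal (exp (t * V \<omega>)) \<partial>M) \<le> ennreal (1 + t*K)" .
  qed
qed

end



context rvtail begin

lemma Fb_meas[measurable]: "Fb \<in> borel_measurable borel"
proof -
  have "mono (\<lambda>y. - Fb y)" by (auto simp: mono_def intro: Fmono)
  then have "(\<lambda>y. - Fb y) \<in> borel_measurable borel" by (rule borel_measurable_mono)
  then have "(\<lambda>y. - (- Fb y)) \<in> borel_measurable borel" by measurable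
  then show ?thesis by simp
qed

lemma breiman:
  assumes P: "prob_space M" and X[measurable]: "X \<in> borel_measurable M"
    and A[measurable]: "A \<in> borel_measurable M"
    and ind: "prob_space.indep_var M borel A borel X"
    and Fdef: "\<And>x. Fb x = measure M {\<omega>\<in>space M. exp (X \<omega>) > x}"
    and e: "\<epsilon> > 0" and int: "integrable M (\<lambda>\<omega>. exp ((\<alpha>+\<epsilon>) * A \<omega>))"
  shows "((\<lambda>x. measure M {\<omega>\<in>space M. exp (X \<omega> + A \<omega>) > x} / Fb x)
           \<longlongrightarrow> (\<integral>\<omega>. exp (\<alpha> * A \<omega>) \<partial>M)) at_top"
proof -
  interpret prob_space M by fact
  define \<mu> where "\<mu> = distr M borel A"
  define D where "D = distr M borel X"
  interpret mu: prob_space \<mu> unfolding \<mu>_def by (rule prob_space_distr) simp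
  interpret D: prob_space D unfolding D_def by (rule prob_space_distr) simp
  have sets_mu[simp, measurable_cong]: "sets \<mu> = sets borel" by (simp add: \<mu>_def)
  have space_mu[simp]: "space \<mu> = UNIV" by (simp add: \<mu>_def)
  have sets_D[simp, measurable_cong]: "sets D = sets borel" by (simp add: D_def)
  have space_D[simp]: "space D = UNIV" by (simp add: D_def)
  have joint: "distr M (borel \<Otimes>\<^sub>M borel) (\<lambda>\<omega>. (A \<omega>, X \<omega>)) = \<mu> \<Otimes>\<^sub>M D"
    using ind[unfolded prob_space.indep_var_distribution_eq[OF P]] unfolding \<mu>_def D_def by simp
  define g where "g t a = Fb (t * exp (-a))" for t a
  have g_meas[measurable]: "g t \<in> borel_measurable borel" for t unfolding g_def by measurable
  have step1: "measure M {\<omega>\<in>space M. exp (X \<omega> + A \<omega>) > t} = (\<integral>a. g t a \<partial>\<mu>)" for t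
  proof -
    define S where "S = {p \<in> space (borel \<Otimes>\<^sub>M borel). exp (snd p + fst p :: real) > t}"
    have S[measurable]: "S \<in> sets (borel \<Otimes>\<^sub>M borel)"
    proof -
      have f: "(\<lambda>p::real\<times>real. exp (snd p + fst p)) \<in> borel_measurable (borel \<Otimes>\<^sub>M borel)" by measurable
      have "S = (\<lambda>p. exp (snd p + fst p)) -` {t<..} \<inter> space (borel \<Otimes>\<^sub>M borel)" by (auto simp: S_def)
      then show ?thesis by (simp only:) (rule measurable_sets[OF f], simp)
    qed
    have "emeasure M {\<omega>\<in>space M. exp (X \<omega> + A \<omega>) > t} = emeasure (distr M (borel \<Otimes>\<^sub>M borel) (\<lambda>\<omega>. (A \<omega>, X \<omega>))) S"
      by (subst emeasure_distr[OF _ S]) (auto simp: S_def space_pair_measure intro!: arg_cong[where f="emeasure M"])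
    also have "\<dots> = emeasure (\<mu> \<Otimes>\<^sub>M D) S" by (simp add: joint)
    also have "\<dots> = (\<integral>\<^sup>+a. emeasure D (Pair a -` S) \<partial>\<mu>)"
      by (rule D.emeasure_pair_measure_alt) (simp add: sets_pair_measure_cong[OF sets_mu sets_D])
    also have "\<dots> = (\<integral>\<^sup>+a. ennreal (g t a) \<partial>\<mu>)"
    proof (intro nn_integral_cong)
      fix a
      have "emeasure D (Pair a -` S) = emeasure M (X -` (Pair a -` S) \<inter> space M)"
        unfolding D_def by (subst emeasure_distr) (auto simp: S_def space_pair_measure)
      also have "X -` (Pair a -` S) \<inter> space M = {\<omega>\<in>space M. exp (X \<omega>) > t * exp (-a)}"
        by (auto simp: S_def space_pair_measure exp_add exp_minus field_simps)
      also have "emeasure M \<dots> = ennreal (g t a)"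
        by (simp add: g_def Fdef emeasure_eq_measure)
      finally show "emeasure D (Pair a -` S) = ennreal (g t a)" .
    qed
    finally have E: "emeasure M {\<omega>\<in>space M. exp (X \<omega> + A \<omega>) > t} = (\<integral>\<^sup>+a. ennreal (g t a) \<partial>\<mu>)" .
    have "(\<integral>a. g t a \<partial>\<mu>) = enn2real (\<integral>\<^sup>+a. ennreal (g t a) \<partial>\<mu>)"
      by (rule integral_eq_nn_integral) (auto simp: g_def Fnn)
    then show ?thesis using E by (simp add: measure_def)
  qed
  define \<beta> where "\<beta> = \<alpha> + \<epsilon>/2"
  have b: "\<beta> > \<alpha>" using e by (simp add: \<beta>_def)
  obtain x0 where x0: "x0 > 0" and Fp: "\<And>x. x\<ge>x0 \<Longrightarrow> Fb x > 0"
     and Pot: "\<And>u x. x0 \<le> u \<Longrightarrow> u \<le> x \<Longrightarrow> Fb u \<le> 2 powr \<beta> * (x/u) powr \<beta> * Fb x"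
    using potter[OF b] by blast
  have intmu: "integrable \<mu> (\<lambda>a. exp ((\<alpha>+\<epsilon>) * a))"
    unfolding \<mu>_def using int by (subst integrable_distr_eq) auto
  have intmu0: "integrable \<mu> (\<lambda>a. exp (\<alpha> * a))"
  proof (rule Bochner_Integration.integrable_bound[of _ "\<lambda>a. 1 + exp ((\<alpha>+\<epsilon>) * a)"])
    show "integrable \<mu> (\<lambda>a. 1 + exp ((\<alpha>+\<epsilon>) * a))" using intmu by simp
    show "AE a in \<mu>. norm (exp (\<alpha> * a)) \<le> norm (1 + exp ((\<alpha>+\<epsilon>) * a))"
    proof (intro AE_I2)
      fix a :: real
      have "exp (\<alpha> * a) \<le> 1 + exp ((\<alpha>+\<epsilon>) * a)"
      proof (cases "a \<le> 0")
        case True then have "exp (\<alpha> * a) \<le> 1" using alpha by (simp add: mult_nonneg_nonpos)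
        then show ?thesis by (smt (verit) exp_gt_zero)
      next
        case False then have "exp (\<alpha> * a) \<le> exp ((\<alpha>+\<epsilon>) * a)" using e by (simp add: mult_right_mono)
        then show ?thesis by (smt (verit) exp_gt_zero)
      qed
      then show "norm (exp (\<alpha> * a)) \<le> norm (1 + exp ((\<alpha>+\<epsilon>) * a))" by simp
    qed
  qed simp
  define s where "s t a = (if x0 \<le> t * exp (-a) then g t a / Fb t else 0)" for t a
  define r where "r t a = (if x0 \<le> t * exp (-a) then 0 else g t a / Fb t)" for t a
  have s_meas[measurable]: "s t \<in> borel_measurable \<mu>" for t unfolding s_def by measurable
  have r_meas[measurable]: "r t \<in> borel_measurable \<mu>" for t unfolding r_def by measurable
  define w where "w a = 1 + 2 powr \<beta> * (1 + exp ((\<alpha>+\<epsilon>) * a))" for a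
  have lim_s: "((\<lambda>t. \<integral>a. s t a \<partial>\<mu>) \<longlongrightarrow> (\<integral>a. exp (\<alpha> * a) \<partial>\<mu>)) at_top"
  proof (rule integral_dominated_convergence_at_top[where w=w])
    show "(\<lambda>a. exp (\<alpha> * a)) \<in> borel_measurable \<mu>" by measurable
    show "integrable \<mu> w" unfolding w_def using intmu by simp
    show "s t \<in> borel_measurable \<mu>" for t by (rule s_meas)
    show "AE a in \<mu>. ((\<lambda>t. s t a) \<longlongrightarrow> exp (\<alpha> * a)) at_top"
    proof (intro AE_I2)
      fix a :: real
      have "((\<lambda>t. Fb (exp (-a) * t) / Fb t) \<longlongrightarrow> exp (-a) powr (-\<alpha>)) at_top"
        by (rule ratio_lim) simp
      moreover have "exp (-a) powr (-\<alpha>) = exp (\<alpha> * a)" by (simp add: powr_def)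
      moreover have "\<forall>\<^sub>F t in at_top. Fb (exp (-a) * t) / Fb t = s t a"
      proof -
        have "\<forall>\<^sub>F t in at_top. t \<ge> x0 * exp a" by (rule eventually_ge_at_top)
        then show ?thesis
        proof eventually_elim
          case (elim t)
          then have "x0 \<le> t * exp (-a)" by (simp add: exp_minus field_simps)
          then show ?case by (simp add: s_def g_def mult.commute)
        qed
      qed
      ultimately show "((\<lambda>t. s t a) \<longlongrightarrow> exp (\<alpha> * a)) at_top" by (simp add: tendsto_cong)
    qed
    show "\<forall>\<^sub>F t in at_top. AE a in \<mu>. norm (s t a) \<le> w a"
    proof -
      have "\<forall>\<^sub>F t in at_top. t \<ge> x0" by (rule eventually_ge_at_top)
      then show ?thesis
      proof eventually_elim
        case (elim t)
        have Ft: "Fb t > 0" using Fp elim by simp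
        show ?case
        proof (intro AE_I2)
          fix a :: real
          have w1: "1 \<le> w a" unfolding w_def by (simp add: add_increasing)
          have s0: "0 \<le> s t a" using Ft Fnn by (simp add: s_def g_def)
          have "s t a \<le> w a"
          proof (cases "x0 \<le> t * exp (-a)")
            case False then show ?thesis using w1 by (simp add: s_def)
          next
            case True
            note u = True
            show ?thesis
            proof (cases "a \<le> 0")
              case True
              then have "t \<le> t * exp (-a)" using elim x0 by simp
              then have "g t a \<le> Fb t" unfolding g_def by (rule Fmono)
              then have "s t a \<le> 1" using u Ft by (simp add: s_def)
              then show ?thesis using w1 by simp
            next
              case False
              have tp: "t > 0" using elim x0 by simp
              have "t * exp (-a) \<le> t" using False tp by simp
              then have "g t a \<le> 2 powr \<beta> * (t / (t * exp (-a))) powr \<beta> * Fb t"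
                unfolding g_def using Pot u by blast
              also have "(t / (t * exp (-a))) powr \<beta> = exp (\<beta> * a)"
              proof -
                have "t / (t * exp (-a)) = exp a" using tp by (simp add: exp_minus divide_inverse)
                then show ?thesis by (simp add: powr_def mult.commute)
              qed
              finally have "s t a \<le> 2 powr \<beta> * exp (\<beta> * a)" using u Ft by (simp add: s_def divide_le_eq)
              also have "exp (\<beta> * a) \<le> exp ((\<alpha>+\<epsilon>) * a)" using False e by (simp add: \<beta>_def mult_right_mono)
              finally show ?thesis unfolding w_def by (smt (verit) exp_gt_zero mult_left_mono powr_ge_zero)
            qed
          qed
          then show "norm (s t a) \<le> w a" using s0 by simp
        qed
      qed
    qed
  qed
  define E where "E = (\<integral>a. exp ((\<alpha>+\<epsilon>) * a) \<partial>\<mu>)"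
  have lim_r: "((\<lambda>t. \<integral>a. r t a \<partial>\<mu>) \<longlongrightarrow> 0) at_top"
  proof -
    have lim0: "((\<lambda>t. (E * x0 powr (\<alpha>+\<epsilon>)) * (t powr (-(\<alpha>+\<epsilon>)) / Fb t)) \<longlongrightarrow> 0) at_top"
      using tendsto_mult[OF tendsto_const tail_over[OF e], of "E * x0 powr (\<alpha>+\<epsilon>)"] by simp
    show ?thesis
    proof (rule tendsto_sandwich[OF _ _ tendsto_const lim0])
      have "\<forall>\<^sub>F t in at_top. t \<ge> x0" by (rule eventually_ge_at_top)
      then show "\<forall>\<^sub>F t in at_top. 0 \<le> (\<integral>a. r t a \<partial>\<mu>)"
        by eventually_elim (auto intro!: integral_nonneg_AE AE_I2 simp: r_def g_def Fnn)
      from \<open>\<forall>\<^sub>F t in at_top. t \<ge> x0\<close>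
      show "\<forall>\<^sub>F t in at_top. (\<integral>a. r t a \<partial>\<mu>) \<le> E * x0 powr (\<alpha>+\<epsilon>) * (t powr (-(\<alpha>+\<epsilon>)) / Fb t)"
      proof eventually_elim
        case (elim t)
        have Ft: "Fb t > 0" using Fp elim by simp
        have tp: "t > 0" using elim x0 by simp
        have pw: "r t a \<le> exp ((\<alpha>+\<epsilon>) * a) * (x0 powr (\<alpha>+\<epsilon>) * t powr (-(\<alpha>+\<epsilon>)) / Fb t)" for a
        proof (cases "x0 \<le> t * exp (-a)")
          case True then show ?thesis using Ft x0 by (simp add: r_def)
        next
          case False
          then have lt: "t / x0 < exp a" using x0 tp by (simp add: exp_minus field_simps)
          have "g t a / Fb t \<le> 1 / Fb t" using Fle1 Ft unfolding g_def by (simp add: divide_right_mono)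
          also have "1 \<le> exp a powr (\<alpha>+\<epsilon>) * (t/x0) powr (-(\<alpha>+\<epsilon>))"
          proof -
            have "(t/x0) powr (\<alpha>+\<epsilon>) \<le> exp a powr (\<alpha>+\<epsilon>)"
              using lt tp x0 alpha e by (intro powr_mono2) auto
            moreover have "(t/x0) powr (\<alpha>+\<epsilon>) > 0" using tp x0 by simp
            ultimately have "1 \<le> exp a powr (\<alpha>+\<epsilon>) / (t/x0) powr (\<alpha>+\<epsilon>)" by (simp add: le_divide_eq)
            then show ?thesis using powr_minus[of "t/x0" "\<alpha>+\<epsilon>"] by (simp add: divide_inverse)
          qed
          then have "1 / Fb t \<le> exp a powr (\<alpha>+\<epsilon>) * (t/x0) powr (-(\<alpha>+\<epsilon>)) / Fb t"
            using Ft by (simp add: divide_right_mono)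
          also have "exp a powr (\<alpha>+\<epsilon>) * (t/x0) powr (-(\<alpha>+\<epsilon>)) / Fb t
             = exp ((\<alpha>+\<epsilon>) * a) * (x0 powr (\<alpha>+\<epsilon>) * t powr (-(\<alpha>+\<epsilon>)) / Fb t)"
            using tp x0 by (simp add: powr_def powr_divide powr_minus exp_minus field_simps exp_diff ln_div exp_add)
          finally show ?thesis using False by (simp add: r_def)
        qed
        have "(\<integral>a. r t a \<partial>\<mu>) \<le> (\<integral>a. exp ((\<alpha>+\<epsilon>) * a) * (x0 powr (\<alpha>+\<epsilon>) * t powr (-(\<alpha>+\<epsilon>)) / Fb t) \<partial>\<mu>)"
        proof (rule integral_mono)
          show "integrable \<mu> (r t)"
            by (rule mu.integrable_const_bound[where B="1 / Fb t"])
               (auto intro!: AE_I2 simp: r_def g_def Fnn Fle1 divide_right_mono Ft)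
          show "integrable \<mu> (\<lambda>a. exp ((\<alpha>+\<epsilon>) * a) * (x0 powr (\<alpha>+\<epsilon>) * t powr (-(\<alpha>+\<epsilon>)) / Fb t))"
            using intmu by simp
        qed (rule pw)
        also have "\<dots> = E * x0 powr (\<alpha>+\<epsilon>) * (t powr (-(\<alpha>+\<epsilon>)) / Fb t)"
          by (simp add: E_def)
        finally show ?case .
      qed
    qed
  qed
  have "((\<lambda>t. (\<integral>a. s t a \<partial>\<mu>) + (\<integral>a. r t a \<partial>\<mu>)) \<longlongrightarrow> (\<integral>a. exp (\<alpha> * a) \<partial>\<mu>) + 0) at_top"
    by (intro tendsto_add lim_s lim_r)
  moreover have "\<forall>\<^sub>F t in at_top. (\<integral>a. s t a \<partial>\<mu>) + (\<integral>a. r t a \<partial>\<mu>) =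
      measure M {\<omega>\<in>space M. exp (X \<omega> + A \<omega>) > t} / Fb t"
  proof -
    have "\<forall>\<^sub>F t in at_top. t \<ge> x0" by (rule eventually_ge_at_top)
    then show ?thesis
    proof eventually_elim
      case (elim t)
      have Ft: "Fb t > 0" using Fp elim by simp
      have iS: "integrable \<mu> (s t)"
        by (rule mu.integrable_const_bound[where B="1 / Fb t"])
           (auto intro!: AE_I2 simp: s_def g_def Fnn Fle1 divide_right_mono Ft)
      have ir: "integrable \<mu> (r t)"
        by (rule mu.integrable_const_bound[where B="1 / Fb t"])
           (auto intro!: AE_I2 simp: r_def g_def Fnn Fle1 divide_right_mono Ft)
      have "(\<integral>a. s t a \<partial>\<mu>) + (\<integral>a. r t a \<partial>\<mu>) = (\<integral>a. s t a + r t a \<partial>\<mu>)"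
        using iS ir by simp
      also have "\<dots> = (\<integral>a. g t a / Fb t \<partial>\<mu>)"
        by (rule Bochner_Integration.integral_cong) (auto simp: s_def r_def)
      also have "\<dots> = (\<integral>a. g t a \<partial>\<mu>) / Fb t" by simp
      finally show ?case using step1 by simp
    qed
  qed
  moreover have "(\<integral>a. exp (\<alpha> * a) \<partial>\<mu>) = (\<integral>\<omega>. exp (\<alpha> * A \<omega>) \<partial>M)"
    unfolding \<mu>_def by (subst integral_distr) auto
  ultimately show ?thesis by (simp add: tendsto_cong)
qed

end



lemma ennprod_le: fixes n :: nat shows "(\<And>j. j < n \<Longrightarrow> f j \<le> g j) \<Longrightarrow> (\<Prod>j<n. (f j::ennreal)) \<le> (\<Prod>j<n. g j)"
proof (induction n)
  case 0 then show ?case by simp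
next
  case (Suc n)
  then have "(\<Prod>j<n. f j) \<le> (\<Prod>j<n. g j)" by simp
  moreover have "f n \<le> g n" using Suc by simp
  ultimately show ?case by (simp add: mult_mono)
qed

lemma exp_mid: assumes "(\<alpha>::real) > 0" "\<epsilon> > 0" shows "exp (\<alpha> * z) \<le> 1 + exp ((\<alpha>+\<epsilon>) * z)"
proof (cases "z \<le> 0")
  case True then have "exp (\<alpha> * z) \<le> 1" using assms by (simp add: mult_nonneg_nonpos)
  then show ?thesis by (smt (verit) exp_gt_zero)
next
  case False then have "exp (\<alpha> * z) \<le> exp ((\<alpha>+\<epsilon>) * z)" using assms by (simp add: mult_right_mono)
  then show ?thesis by (smt (verit) exp_gt_zero)
qed

lemma reidx:
  assumes P: "prob_space M" and ind: "prob_space.indep_vars M (\<lambda>_. borel) \<eta> UNIV"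
    and k: "inj k"
  shows "prob_space.indep_vars M (\<lambda>_. borel) (\<lambda>n \<omega>. (\<eta> (k n) \<omega> :: real)) UNIV"
proof -
  interpret prob_space M by fact
  have "indep_vars (\<lambda>j. PiM {k j} (\<lambda>_. borel)) (\<lambda>j \<omega>. restrict (\<lambda>i. \<eta> i \<omega>) {k j}) UNIV"
    using k by (intro indep_vars_restrict[OF ind]) (auto simp: disjoint_family_on_def inj_def)
  then have "indep_vars (\<lambda>_. borel) (\<lambda>j \<omega>. (\<lambda>f. f (k j)) (restrict (\<lambda>i. \<eta> i \<omega>) {k j})) UNIV"
    by (rule indep_vars_compose2) simp
  then show ?thesis by simp
qed

theorem lemma3p2:
  fixes M :: "'a measure" and \<eta> :: "int \<Rightarrow> 'a \<Rightarrow> real" and Y :: "'a \<Rightarrow> real"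
    and \<phi> \<alpha> c :: real and L :: "real \<Rightarrow> real"
  assumes "prob_space M"
    and meas: "\<And>t. \<eta> t \<in> borel_measurable M"
    and indep: "prob_space.indep_vars M (\<lambda>_. borel) \<eta> UNIV"
    and ident: "\<And>t. distr M borel (\<eta> t) = distr M borel (\<eta> 0)"
    and phi: "-1 < \<phi>" "\<phi> < 1"
    and Y_meas: "Y \<in> borel_measurable M"
    and Y_def: "AE \<omega> in M. (\<lambda>j. \<phi> ^ j * \<eta> (- int j) \<omega>) sums Y \<omega>"
    and alpha: "\<alpha> > 0"
    and L: "slowly_varying L"
    and tail: "\<And>x. x > 0 \<Longrightarrow>
       measure M {\<omega> \<in> space M. exp (\<eta> 0 \<omega>) > x} = x powr (-\<alpha>) * L x"
    and neg: "\<phi> < 0 \<Longrightarrow> c > 0 \<and> (\<forall>x\<ge>1.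
       measure M {\<omega> \<in> space M. exp (max (- \<eta> 0 \<omega>) 0) > x}
         \<le> c * measure M {\<omega> \<in> space M. exp (\<eta> 0 \<omega>) > x})"
  shows "(\<exists>\<epsilon>>0. integrable M (\<lambda>\<omega>. exp ((\<alpha> + \<epsilon>) * \<phi> * Y \<omega>)))
    \<and> (\<lambda>x. measure M {\<omega> \<in> space M. exp (Y \<omega>) > x})
        \<sim>[at_top] (\<lambda>x. (\<integral>\<omega>. exp (\<alpha> * \<phi> * Y \<omega>) \<partial>M)
                            * measure M {\<omega> \<in> space M. exp (\<eta> 0 \<omega>) > x})"
proof -
  interpret prob_space M by fact
  note meas[measurable] Y_meas[measurable]
  define Fb where "Fb x = measure M {\<omega> \<in> space M. exp (\<eta> 0 \<omega>) > x}" for x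
  interpret F: rvtail Fb L \<alpha>
  proof
    show "\<alpha> > 0" by fact
    show "slowly_varying L" by fact
    show "Fb y \<le> Fb x" if "x \<le> y" for x y
      unfolding Fb_def using that by (intro finite_measure_mono) auto
    show "0 \<le> Fb x" for x by (simp add: Fb_def)
    show "Fb x \<le> 1" for x by (simp add: Fb_def)
    show "Fb x = x powr (-\<alpha>) * L x" if "x > 0" for x using tail that by (simp add: Fb_def)
  qed
  define PP where "PP = PiM (UNIV::nat set) (\<lambda>_. (borel :: real measure))"
  define seq0 where "seq0 \<omega> = (\<lambda>n::nat. \<eta> (- int n) \<omega>)" for \<omega>
  define seq1 where "seq1 \<omega> = (\<lambda>n::nat. \<eta> (- int n - 1) \<omega>)" for \<omega>
  have seq0_m[measurable]: "seq0 \<in> M \<rightarrow>\<^sub>M PP"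
  proof -
    have "(\<lambda>\<omega> n. \<eta> (- int n) \<omega>) \<in> M \<rightarrow>\<^sub>M PiM (UNIV::nat set) (\<lambda>_. borel)"
      using measurable_restrict[of UNIV "\<lambda>n \<omega>. \<eta> (- int n) \<omega>" M "\<lambda>_. borel"] by (simp add: restrict_UNIV)
    then show ?thesis by (simp add: seq0_def[abs_def] PP_def)
  qed
  have seq1_m[measurable]: "seq1 \<in> M \<rightarrow>\<^sub>M PP"
  proof -
    have "(\<lambda>\<omega> n. \<eta> (- int n - 1) \<omega>) \<in> M \<rightarrow>\<^sub>M PiM (UNIV::nat set) (\<lambda>_. borel)"
      using measurable_restrict[of UNIV "\<lambda>n \<omega>. \<eta> (- int n - 1) \<omega>" M "\<lambda>_. borel"] by (simp add: restrict_UNIV)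
    then show ?thesis by (simp add: seq1_def[abs_def] PP_def)
  qed
  have ind0: "indep_vars (\<lambda>_. borel) (\<lambda>n \<omega>. \<eta> (- int n) \<omega>) UNIV"
    by (rule reidx[OF \<open>prob_space M\<close> indep]) (auto simp: inj_def)
  have ind1: "indep_vars (\<lambda>_. borel) (\<lambda>n \<omega>. \<eta> (- int n - 1) \<omega>) UNIV"
    by (rule reidx[OF \<open>prob_space M\<close> indep]) (auto simp: inj_def)
  have dseq0: "distr M PP seq0 = PiM UNIV (\<lambda>_. distr M borel (\<eta> 0))"
  proof -
    have "distr M PP seq0 = PiM UNIV (\<lambda>n. distr M borel (\<eta> (- int n)))"
      using indep_vars_iff_distr_eq_PiM[of UNIV "\<lambda>n \<omega>. \<eta> (- int n) \<omega>" "\<lambda>_. borel"] ind0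
      by (simp add: PP_def seq0_def[abs_def] restrict_UNIV)
    moreover have "(\<lambda>n. distr M borel (\<eta> (- int n))) = (\<lambda>_. distr M borel (\<eta> 0))"
      "(\<lambda>n. distr M borel (\<eta> (- int n - 1))) = (\<lambda>_. distr M borel (\<eta> 0))"
      by (intro ext ident)+
    ultimately show ?thesis by simp
  qed
  have dseq1: "distr M PP seq1 = PiM UNIV (\<lambda>_. distr M borel (\<eta> 0))"
  proof -
    have "distr M PP seq1 = PiM UNIV (\<lambda>n. distr M borel (\<eta> (- int n - 1)))"
      using indep_vars_iff_distr_eq_PiM[of UNIV "\<lambda>n \<omega>. \<eta> (- int n - 1) \<omega>" "\<lambda>_. borel"] ind1
      by (simp add: PP_def seq1_def[abs_def] restrict_UNIV)
    moreover have "(\<lambda>n. distr M borel (\<eta> (- int n))) = (\<lambda>_. distr M borel (\<eta> 0))"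
      "(\<lambda>n. distr M borel (\<eta> (- int n - 1))) = (\<lambda>_. distr M borel (\<eta> 0))"
      by (intro ext ident)+
    ultimately show ?thesis by simp
  qed
  define G where "G f = lim (\<lambda>n. \<Sum>j<n. \<phi>^j * f j)" for f :: "nat \<Rightarrow> real"
  have G_m[measurable]: "G \<in> borel_measurable PP" unfolding G_def PP_def by measurable
  define Ym where "Ym \<omega> = G (seq1 \<omega>)" for \<omega>
  have Ym_m[measurable]: "Ym \<in> borel_measurable M" unfolding Ym_def by measurable
  have Y_G: "AE \<omega> in M. Y \<omega> = G (seq0 \<omega>)"
    using Y_def by eventually_elim (auto simp: G_def seq0_def sums_def limI)
  have dY: "distr M borel Y = distr M borel Ym"
  proof -
    have "distr M borel Y = distr M borel (\<lambda>\<omega>. G (seq0 \<omega>))"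
      by (rule distr_cong_AE) (auto simp: Y_G)
    also have "\<dots> = distr (distr M PP seq0) borel G" by (subst distr_distr) (auto simp: comp_def)
    also have "\<dots> = distr (distr M PP seq1) borel G" by (simp add: dseq0 dseq1)
    also have "\<dots> = distr M borel Ym" by (subst distr_distr) (auto simp: comp_def Ym_def[abs_def])
    finally show ?thesis .
  qed
  have Y_rec: "AE \<omega> in M. Y \<omega> = \<eta> 0 \<omega> + \<phi> * Ym \<omega>"
    using Y_def
  proof eventually_elim
    case (elim \<omega>)
    define f where "f j = \<phi> ^ j * \<eta> (- int j) \<omega>" for j
    have fs: "f sums Y \<omega>" using elim by (simp add: f_def[abs_def])
    then have s1: "(\<lambda>n. f (Suc n)) sums (Y \<omega> - \<eta> 0 \<omega>)" by (subst sums_Suc_iff) (simp add: f_def)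
    have fS: "f (Suc n) = \<phi> * (\<phi>^n * \<eta> (- int n - 1) \<omega>)" for n
    proof -
      have e: "- 1 - int n = - int n - 1" by simp
      show ?thesis by (simp add: f_def) (metis e)
    qed
    show ?case
    proof (cases "\<phi> = 0")
      case True
      then have "(\<lambda>n. f (Suc n)) = (\<lambda>_. 0)" by (simp add: fS fun_eq_iff)
      then have "Y \<omega> - \<eta> 0 \<omega> = 0" using s1 sums_unique2 sums_zero by metis
      then show ?thesis using True by simp
    next
      case False
      have "(\<lambda>n. (1/\<phi>) * f (Suc n)) sums ((1/\<phi>) * (Y \<omega> - \<eta> 0 \<omega>))" by (rule sums_mult[OF s1])
      then have "(\<lambda>n. \<phi>^n * \<eta> (- int n - 1) \<omega>) sums ((Y \<omega> - \<eta> 0 \<omega>) / \<phi>)" using False by (simp add: fS)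
      then have "Ym \<omega> = (Y \<omega> - \<eta> 0 \<omega>) / \<phi>" by (simp add: Ym_def G_def seq1_def sums_def limI)
      then show ?thesis using False by simp
    qed
  qed
  have indAX: "indep_var borel (\<lambda>\<omega>. \<phi> * Ym \<omega>) borel (\<eta> 0)"
  proof -
    have sh: "(\<lambda>f. \<lambda>n::nat. f (- int n - 1)) \<in> PiM {i::int. i<0} (\<lambda>_. borel) \<rightarrow>\<^sub>M PP"
      using measurable_restrict[of UNIV "\<lambda>n f. f (- int n - 1)" "PiM {i::int. i<0} (\<lambda>_. borel)" "\<lambda>_. (borel::real measure)"]
      by (simp add: PP_def restrict_UNIV measurable_component_singleton)
    have GS[measurable]: "(\<lambda>f. G (\<lambda>n::nat. f (- int n - 1))) \<in> borel_measurable (PiM {i::int. i<0} (\<lambda>_. borel))"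
      using measurable_compose[OF sh G_m] by simp
    have "indep_var (PiM {i::int. i<0} (\<lambda>_. borel)) (\<lambda>\<omega>. restrict (\<lambda>i. \<eta> i \<omega>) {i. i<0})
                    (PiM {0} (\<lambda>_. borel)) (\<lambda>\<omega>. restrict (\<lambda>i. \<eta> i \<omega>) {0})"
      by (rule indep_var_restrict[OF indep]) auto
    then have "indep_var borel ((\<lambda>f. \<phi> * G (\<lambda>n::nat. f (- int n - 1))) \<circ> (\<lambda>\<omega>. restrict (\<lambda>i. \<eta> i \<omega>) {i. i<0}))
                    borel ((\<lambda>f. f 0) \<circ> (\<lambda>\<omega>. restrict (\<lambda>i. \<eta> i \<omega>) {0}))"
    proof (rule indep_var_compose)
      show "(\<lambda>f. \<phi> * G (\<lambda>n::nat. f (- int n - 1))) \<in> borel_measurable (PiM {i::int. i<0} (\<lambda>_. borel))"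
        using GS by (intro borel_measurable_times borel_measurable_const)
      show "(\<lambda>f. f 0) \<in> borel_measurable (PiM {0::int} (\<lambda>_. borel))"
        by (rule measurable_component_singleton) simp
    qed
    moreover have "((\<lambda>f. \<phi> * G (\<lambda>n::nat. f (- int n - 1))) \<circ> (\<lambda>\<omega>. restrict (\<lambda>i. \<eta> i \<omega>) {i. i<0}))
       = (\<lambda>\<omega>. \<phi> * Ym \<omega>)"
      by (auto simp: fun_eq_iff Ym_def seq1_def)
    moreover have "((\<lambda>f. f 0) \<circ> (\<lambda>\<omega>. restrict (\<lambda>i. \<eta> i \<omega>) {0})) = \<eta> 0"
      by (auto simp: fun_eq_iff)
    ultimately show ?thesis by simp
  qed
  have mom: "\<exists>\<epsilon>>0. integrable M (\<lambda>\<omega>. exp ((\<alpha> + \<epsilon>) * \<phi> * Y \<omega>))"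
  proof (cases "\<phi> = 0")
    case True then show ?thesis by (intro exI[of _ 1]) simp
  next
    case False
    define a where "a = \<bar>\<phi>\<bar>"
    have a: "0 < a" "a < 1" using False phi by (auto simp: a_def)
    define t0 where "t0 = \<alpha>*(1+a)/2"
    define t1 where "t1 = \<alpha>*(3+a)/4"
    have tt: "0 \<le> t0" "t0 < t1" "t1 < \<alpha>" using a alpha by (auto simp: t0_def t1_def)
    define \<epsilon> where "\<epsilon> = t0/a - \<alpha>"
    have epos: "\<epsilon> > 0"
    proof -
      have "\<alpha> * a < t0" using a alpha by (simp add: t0_def field_simps)
      then show ?thesis using a by (simp add: \<epsilon>_def field_simps)
    qed
    define s where "s = (\<alpha>+\<epsilon>)*\<phi>"
    have sabs: "\<bar>s\<bar> = t0" using a tt by (simp add: s_def \<epsilon>_def abs_mult a_def)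
    have tl1: "measure M {\<omega>\<in>space M. exp (max (\<eta> 0 \<omega>) 0) > x} \<le> 1 * Fb x" if "x \<ge> 1" for x
    proof -
      have "{\<omega>\<in>space M. exp (max (\<eta> 0 \<omega>) 0) > x} = {\<omega>\<in>space M. exp (\<eta> 0 \<omega>) > x}"
        using that by (auto simp: max_def) (smt (verit) exp_le_one_iff)
      then show ?thesis by (simp add: Fb_def)
    qed
    obtain K1 where K1: "K1 \<ge> 0" "\<And>t. 0 \<le> t \<Longrightarrow> t \<le> t0 \<Longrightarrow> (\<integral>\<^sup>+\<omega>. ennreal (exp (t * \<eta> 0 \<omega>)) \<partial>M) \<le> ennreal (1 + t*K1)"
      using F.mgf_bound[OF \<open>prob_space M\<close> meas[of 0] _ tl1 tt] by auto
    obtain K2 where K2: "K2 \<ge> 0" "\<And>t. \<phi> < 0 \<Longrightarrow> 0 \<le> t \<Longrightarrow> t \<le> t0 \<Longrightarrow> (\<integral>\<^sup>+\<omega>. ennreal (exp (t * (- \<eta> 0 \<omega>))) \<partial>M) \<le> ennreal (1 + t*K2)"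
    proof (cases "\<phi> < 0")
      case True
      from neg[OF True] have c: "c > 0" and tl2: "\<And>x. x \<ge> 1 \<Longrightarrow> measure M {\<omega>\<in>space M. exp (max (- \<eta> 0 \<omega>) 0) > x} \<le> c * Fb x"
        by (auto simp: Fb_def)
      have "(\<lambda>\<omega>. - \<eta> 0 \<omega>) \<in> borel_measurable M" by measurable
      from F.mgf_bound[OF \<open>prob_space M\<close> this _ tl2 tt] c
      obtain K2 where "K2 \<ge> 0" "\<And>t. 0 \<le> t \<Longrightarrow> t \<le> t0 \<Longrightarrow> (\<integral>\<^sup>+\<omega>. ennreal (exp (t * (- \<eta> 0 \<omega>))) \<partial>M) \<le> ennreal (1 + t*K2)"
        by auto
      then show ?thesis using that by blast
    next
      case False then show ?thesis using that[of 0] by auto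
    qed
    define K where "K = K1 + K2"
    have mg: "(\<integral>\<^sup>+\<omega>. ennreal (exp (u * \<eta> 0 \<omega>)) \<partial>M) \<le> ennreal (1 + \<bar>u\<bar> * K)"
      if u: "\<bar>u\<bar> \<le> t0" "\<phi> < 0 \<or> u \<ge> 0" for u
    proof (cases "u \<ge> 0")
      case True
      then have "(\<integral>\<^sup>+\<omega>. ennreal (exp (u * \<eta> 0 \<omega>)) \<partial>M) \<le> ennreal (1 + u*K1)" using K1 u by auto
      also have "\<dots> \<le> ennreal (1 + \<bar>u\<bar> * K)" using True K1 K2
        by (intro ennreal_leI) (simp add: K_def mult_left_mono)
      finally show ?thesis .
    next
      case False
      then have ph: "\<phi> < 0" using u by auto
      have "(\<integral>\<^sup>+\<omega>. ennreal (exp (u * \<eta> 0 \<omega>)) \<partial>M) = (\<integral>\<^sup>+\<omega>. ennreal (exp ((-u) * (- \<eta> 0 \<omega>))) \<partial>M)"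
        by simp
      also have "\<dots> \<le> ennreal (1 + (-u)*K2)" using K2(2)[OF ph, of "-u"] u False by auto
      also have "\<dots> \<le> ennreal (1 + \<bar>u\<bar> * K)" using False K1 K2
        by (intro ennreal_leI) (simp add: K_def mult_left_mono)
      finally show ?thesis .
    qed
    define tj where "tj j = s * \<phi>^j" for j :: nat
    have tj_abs: "\<bar>tj j\<bar> = t0 * a^j" for j by (simp add: tj_def abs_mult sabs a_def power_abs)
    have tj_le: "\<bar>tj j\<bar> \<le> t0" for j
    proof -
      have "a^j \<le> 1" using a by (simp add: power_le_one)
      then show ?thesis using tt by (simp add: tj_abs mult_left_le)
    qed
    have tj_sign: "\<phi> < 0 \<or> tj j \<ge> 0" for j
    proof (cases "\<phi> < 0")
      case False
      then have "\<phi> > 0" using \<open>\<phi> \<noteq> 0\<close> by simp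
      then show ?thesis using alpha epos by (simp add: tj_def s_def)
    qed simp
    define S where "S n \<omega> = (\<Sum>j<n. \<phi>^j * \<eta> (- int j) \<omega>)" for n \<omega>
    define B where "B = exp (K * t0 / (1 - a))"
    have Kpos: "K \<ge> 0" using K1 K2 by (simp add: K_def)
    have int_n: "(\<integral>\<^sup>+\<omega>. ennreal (exp (s * S n \<omega>)) \<partial>M) \<le> ennreal B" for n
    proof -
      have "(\<integral>\<^sup>+\<omega>. ennreal (exp (s * S n \<omega>)) \<partial>M) = (\<integral>\<^sup>+\<omega>. ennreal (\<Prod>j<n. exp (tj j * \<eta> (- int j) \<omega>)) \<partial>M)"
        by (simp add: S_def tj_def sum_distrib_left exp_sum mult.assoc)
      also have "\<dots> = (\<integral>\<^sup>+\<omega>. (\<Prod>j<n. ennreal (exp (tj j * \<eta> (- int j) \<omega>))) \<partial>M)"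
        by (intro nn_integral_cong) (simp add: prod_ennreal)
      also have "\<dots> = (\<Prod>j<n. \<integral>\<^sup>+\<omega>. ennreal (exp (tj j * \<eta> (- int j) \<omega>)) \<partial>M)"
      proof (rule indep_vars_nn_integral)
        have "indep_vars (\<lambda>_. borel) (\<lambda>j \<omega>. (\<lambda>x. ennreal (exp (tj j * x))) (\<eta> (- int j) \<omega>)) UNIV"
          by (rule indep_vars_compose2[OF ind0]) simp
        then show "indep_vars (\<lambda>_. borel) (\<lambda>j \<omega>. ennreal (exp (tj j * \<eta> (- int j) \<omega>))) {..<n}"
          by (rule indep_vars_subset) simp
      qed auto
      also have "\<dots> = (\<Prod>j<n. \<integral>\<^sup>+\<omega>. ennreal (exp (tj j * \<eta> 0 \<omega>)) \<partial>M)"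
      proof (intro prod.cong refl)
        fix j
        have "(\<integral>\<^sup>+\<omega>. ennreal (exp (tj j * \<eta> (- int j) \<omega>)) \<partial>M)
            = (\<integral>\<^sup>+x. ennreal (exp (tj j * x)) \<partial>distr M borel (\<eta> (- int j)))"
          by (subst nn_integral_distr) auto
        also have "\<dots> = (\<integral>\<^sup>+x. ennreal (exp (tj j * x)) \<partial>distr M borel (\<eta> 0))" by (subst ident[of "- int j"]) (rule refl)
        also have "\<dots> = (\<integral>\<^sup>+\<omega>. ennreal (exp (tj j * \<eta> 0 \<omega>)) \<partial>M)"
          by (subst nn_integral_distr) auto
        finally show "(\<integral>\<^sup>+\<omega>. ennreal (exp (tj j * \<eta> (- int j) \<omega>)) \<partial>M) = (\<integral>\<^sup>+\<omega>. ennreal (exp (tj j * \<eta> 0 \<omega>)) \<partial>M)" .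
      qed
      also have "\<dots> \<le> (\<Prod>j<n. ennreal (1 + K * t0 * a^j))"
      proof (rule ennprod_le)
        fix j
        have "(\<integral>\<^sup>+\<omega>. ennreal (exp (tj j * \<eta> 0 \<omega>)) \<partial>M) \<le> ennreal (1 + \<bar>tj j\<bar> * K)"
          by (rule mg[OF tj_le tj_sign])
        also have "\<dots> = ennreal (1 + K * t0 * a^j)" by (simp add: tj_abs algebra_simps)
        finally show "(\<integral>\<^sup>+\<omega>. ennreal (exp (tj j * \<eta> 0 \<omega>)) \<partial>M) \<le> ennreal (1 + K * t0 * a^j)" .
      qed
      also have "\<dots> = ennreal (\<Prod>j<n. 1 + K * t0 * a^j)"
        using Kpos tt a by (intro prod_ennreal) auto
      also have "\<dots> \<le> ennreal (\<Prod>j<n. exp (K * t0 * a^j))"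
        using Kpos tt a by (intro ennreal_leI prod_mono) (auto simp: add_nonneg_nonneg exp_ge_add_one_self[simplified add.commute])
      also have "(\<Prod>j<n. exp (K * t0 * a^j)) = exp (K * t0 * (\<Sum>j<n. a^j))"
        by (simp add: exp_sum sum_distrib_left)
      also have "\<dots> \<le> B"
      proof -
        have sm: "summable (\<lambda>j. a^j)" using a by (intro summable_geometric) simp
        have "(\<Sum>j<n. a^j) \<le> (\<Sum>j. a^j)" using a by (intro sum_le_suminf sm) auto
        also have "\<dots> = 1 / (1 - a)" using a by (simp add: suminf_geometric)
        finally have "K * t0 * (\<Sum>j<n. a^j) \<le> K * t0 * (1 / (1 - a))" using Kpos tt by (intro mult_left_mono) auto
        then show ?thesis by (simp add: B_def)
      qed
      finally show ?thesis by (simp add: ennreal_leI)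
    qed
    have conv: "AE \<omega> in M. (\<lambda>n. S n \<omega>) \<longlonglongrightarrow> Y \<omega>"
      using Y_def by eventually_elim (simp add: S_def sums_def)
    have "(\<integral>\<^sup>+\<omega>. ennreal (exp (s * Y \<omega>)) \<partial>M) = (\<integral>\<^sup>+\<omega>. liminf (\<lambda>n. ennreal (exp (s * S n \<omega>))) \<partial>M)"
    proof (rule nn_integral_cong_AE)
      show "AE \<omega> in M. ennreal (exp (s * Y \<omega>)) = liminf (\<lambda>n. ennreal (exp (s * S n \<omega>)))"
        using conv
      proof eventually_elim
        case (elim \<omega>)
        have lim1: "(\<lambda>n. ennreal (exp (s * S n \<omega>))) \<longlonglongrightarrow> ennreal (exp (s * Y \<omega>))"
          by (intro tendsto_ennrealI tendsto_exp tendsto_mult tendsto_const elim)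
        show ?case using lim_imp_Liminf[OF trivial_limit_sequentially lim1] by simp
      qed
    qed
    also have "\<dots> \<le> liminf (\<lambda>n. \<integral>\<^sup>+\<omega>. ennreal (exp (s * S n \<omega>)) \<partial>M)"
      by (rule nn_integral_liminf) (simp add: S_def)
    also have "\<dots> \<le> limsup (\<lambda>n. \<integral>\<^sup>+\<omega>. ennreal (exp (s * S n \<omega>)) \<partial>M)"
      by (rule Liminf_le_Limsup) simp
    also have "\<dots> \<le> ennreal B" by (rule Limsup_bounded) (simp add: int_n)
    finally have "(\<integral>\<^sup>+\<omega>. ennreal (exp (s * Y \<omega>)) \<partial>M) < \<infinity>" by (simp add: le_less_trans)
    then have "integrable M (\<lambda>\<omega>. exp (s * Y \<omega>))" by (intro integrableI_nonneg) auto
    then show ?thesis using epos by (intro exI[of _ \<epsilon>]) (simp add: s_def)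
  qed
  obtain \<epsilon> where e: "\<epsilon> > 0" and intY: "integrable M (\<lambda>\<omega>. exp ((\<alpha> + \<epsilon>) * \<phi> * Y \<omega>))"
    using mom by blast
  have intYm: "integrable M (\<lambda>\<omega>. exp ((\<alpha> + \<epsilon>) * (\<phi> * Ym \<omega>)))"
  proof -
    have "integrable (distr M borel Y) (\<lambda>y. exp ((\<alpha> + \<epsilon>) * \<phi> * y))"
      using intY by (subst integrable_distr_eq) auto
    then have "integrable (distr M borel Ym) (\<lambda>y. exp ((\<alpha> + \<epsilon>) * \<phi> * y))" by (simp add: dY)
    then have "integrable M (\<lambda>\<omega>. exp ((\<alpha> + \<epsilon>) * \<phi> * Ym \<omega>))"
      by (subst (asm) integrable_distr_eq) auto
    then show ?thesis by (simp add: mult.assoc)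
  qed
  have lim: "((\<lambda>x. measure M {\<omega>\<in>space M. exp (\<eta> 0 \<omega> + \<phi> * Ym \<omega>) > x} / Fb x)
           \<longlongrightarrow> (\<integral>\<omega>. exp (\<alpha> * (\<phi> * Ym \<omega>)) \<partial>M)) at_top"
    by (rule F.breiman[OF \<open>prob_space M\<close> _ _ indAX Fb_def e intYm]) auto
  have meq: "measure M {\<omega>\<in>space M. exp (Y \<omega>) > x} = measure M {\<omega>\<in>space M. exp (\<eta> 0 \<omega> + \<phi> * Ym \<omega>) > x}" for x
    by (rule measure_eq_AE) (use Y_rec in auto)
  define Ec where "Ec = (\<integral>\<omega>. exp (\<alpha> * \<phi> * Y \<omega>) \<partial>M)"
  have Eeq: "(\<integral>\<omega>. exp (\<alpha> * (\<phi> * Ym \<omega>)) \<partial>M) = Ec"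
  proof -
    have "(\<integral>\<omega>. exp (\<alpha> * (\<phi> * Ym \<omega>)) \<partial>M) = (\<integral>y. exp (\<alpha> * \<phi> * y) \<partial>distr M borel Ym)"
      by (subst integral_distr) (auto simp: mult.assoc)
    also have "\<dots> = (\<integral>y. exp (\<alpha> * \<phi> * y) \<partial>distr M borel Y)" by (simp add: dY)
    also have "\<dots> = Ec" unfolding Ec_def by (subst integral_distr) auto
    finally show ?thesis .
  qed
  have intE: "integrable M (\<lambda>\<omega>. exp (\<alpha> * \<phi> * Y \<omega>))"
  proof (rule Bochner_Integration.integrable_bound[of _ "\<lambda>\<omega>. 1 + exp ((\<alpha> + \<epsilon>) * \<phi> * Y \<omega>)"])
    show "integrable M (\<lambda>\<omega>. 1 + exp ((\<alpha> + \<epsilon>) * \<phi> * Y \<omega>))" using intY by simp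
    show "AE \<omega> in M. norm (exp (\<alpha> * \<phi> * Y \<omega>)) \<le> norm (1 + exp ((\<alpha> + \<epsilon>) * \<phi> * Y \<omega>))"
    proof (intro AE_I2)
      fix \<omega>
      have "exp (\<alpha> * (\<phi> * Y \<omega>)) \<le> 1 + exp ((\<alpha> + \<epsilon>) * (\<phi> * Y \<omega>))" by (rule exp_mid[OF alpha e])
      then show "norm (exp (\<alpha> * \<phi> * Y \<omega>)) \<le> norm (1 + exp ((\<alpha> + \<epsilon>) * \<phi> * Y \<omega>))"
        by (simp add: mult.assoc)
    qed
  qed simp
  have Epos: "Ec > 0"
  proof -
    have nn: "(\<integral>\<^sup>+\<omega>. ennreal (exp (\<alpha> * \<phi> * Y \<omega>)) \<partial>M) = ennreal Ec"
      unfolding Ec_def by (rule nn_integral_eq_integral[OF intE]) simp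
    have "(\<integral>\<^sup>+\<omega>. ennreal (exp (\<alpha> * \<phi> * Y \<omega>)) \<partial>M) \<noteq> 0"
    proof
      assume "(\<integral>\<^sup>+\<omega>. ennreal (exp (\<alpha> * \<phi> * Y \<omega>)) \<partial>M) = 0"
      then have "AE \<omega> in M. ennreal (exp (\<alpha> * \<phi> * Y \<omega>)) = 0"
        by (subst (asm) nn_integral_0_iff_AE) auto
      then have "AE \<omega> in M. False" by simp
      then show False by simp
    qed
    then show ?thesis using nn ennreal_eq_0_iff[of Ec] by auto
  qed
  show ?thesis
  proof
    show "\<exists>\<epsilon>>0. integrable M (\<lambda>\<omega>. exp ((\<alpha> + \<epsilon>) * \<phi> * Y \<omega>))" by (rule mom)
    have "((\<lambda>x. (measure M {\<omega>\<in>space M. exp (Y \<omega>) > x} / Fb x) / Ec) \<longlongrightarrow> Ec / Ec) at_top"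
      using tendsto_divide[OF lim tendsto_const, of Ec] Epos by (simp add: meq Eeq)
    then have "((\<lambda>x. measure M {\<omega>\<in>space M. exp (Y \<omega>) > x} / (Ec * Fb x)) \<longlongrightarrow> 1) at_top"
      using Epos by (simp add: field_simps)
    then show "(\<lambda>x. measure M {\<omega> \<in> space M. exp (Y \<omega>) > x})
        \<sim>[at_top] (\<lambda>x. (\<integral>\<omega>. exp (\<alpha> * \<phi> * Y \<omega>) \<partial>M)
                            * measure M {\<omega> \<in> space M. exp (\<eta> 0 \<omega>) > x})"
      unfolding Ec_def[symmetric] Fb_def[symmetric] by (rule asymp_equivI')
  qed
qed


end
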